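(* For $|q|<1$ and $m\in\mathbb Z$ define $$f_m(q)=\sum_{n,k\ge0}(-1)^kq^{n(n+1)+k(k+1)/2-nk+mn}\frac{(q;q)_{n+k}}{(q;q)_n^3(q;q)_k}.$$ Then $$f_{-1}(q)=(q;q)_\infty\sum_{n\ge0}\frac{q^{n(n+1)}}{(q;q)_n^3},\qquad f_{-2}(q)=(q;q)_\infty\sum_{n\ge0}(2-q^n)\frac{q^{n(n+1)}}{(q;q)_n^3},$$ $$f_{-3}(q)=(q;q)_\infty\sum_{n\ge0}\Big((3+q^{-1})-(2+2q^{-1})q^n+q^{2n-1}\Big)\frac{q^{n(n+1)}}{(q;q)_n^3}.$$
   Context: $(a;q)_n=\prod_{j=0}^{n-1}(1-aq^j)$ and $(q;q)_\infty=\prod_{j\ge1}(1-q^j)$, for $|q|<1$. The double series converges absolutely since $n^2-nk+k^2/2$ is a positive definite quadratic form. *)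

theory Defs
  imports "HOL-Analysis.Analysis"
begin

definition qpoch :: "complex \<Rightarrow> complex \<Rightarrow> nat \<Rightarrow> complex" where
  "qpoch a q n = (\<Prod>j<n. 1 - a * q ^ j)"

definition qpoch_inf :: "complex \<Rightarrow> complex" where
  "qpoch_inf q = (\<Prod>j. 1 - q ^ Suc j)"

text \<open>The summand of f_m; the exponent n(n+1) + k(k+1)/2 - nk + mn is an integer
  (possibly negative for m < 0), so we use integer powers.\<close>
definition f_term :: "int \<Rightarrow> complex \<Rightarrow> nat \<times> nat \<Rightarrow> complex" where
  "f_term m q nk = (case nk of (n, k) \<Rightarrow>
     (-1) ^ k * q powi (int (n * (n + 1)) + int (k * (k + 1) div 2) - int n * int k + m * int n)
     * qpoch q q (n + k) / ((qpoch q q n) ^ 3 * qpoch q q k))"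

definition f_series :: "int \<Rightarrow> complex \<Rightarrow> complex" where
  "f_series m q = (\<Sum>\<^sub>\<infinity>nk\<in>UNIV. f_term m q nk)"

end

theory Submission
  imports Defs
begin


lemma qpoch_0[simp]: "qpoch a q 0 = 1" by (simp add: qpoch_def)
lemma qpoch_Suc: "qpoch a q (Suc n) = qpoch a q n * (1 - a * q ^ n)"
  by (simp add: qpoch_def)
lemma qpoch_Suc_shift: "qpoch z q (Suc k) = (1 - z) * qpoch (z * q) q k"
  unfolding qpoch_def by (subst prod.lessThan_Suc_shift) (simp add: mult_ac)
lemma qpoch_qq_Suc: "qpoch q q (Suc n) = qpoch q q n * (1 - q ^ Suc n)"
  by (simp add: qpoch_Suc)

lemma qpoch_add: "qpoch q q (n + k) = qpoch q q n * qpoch (q ^ Suc n) q k"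
  by (induction k) (simp_all add: qpoch_Suc power_add mult_ac)

lemma rpow_Suc_lt1:
  fixes r :: real assumes "0 \<le> r" "r < 1"
  shows "r ^ Suc j < 1" "r ^ Suc j \<le> r" "r * r ^ j < 1"
proof -
  have "r ^ j \<le> 1" using assms by (simp add: power_le_one)
  hence "r * r ^ j \<le> r" using assms by (simp add: mult_left_le)
  thus "r ^ Suc j < 1" "r ^ Suc j \<le> r" "r * r ^ j < 1" using assms by auto
qed

lemma qpoch_nz:
  assumes "norm q < 1" shows "qpoch q q n \<noteq> 0"
proof -
  have "1 - q * q ^ j \<noteq> 0" for j
  proof
    assume "1 - q * q ^ j = 0"
    hence "q ^ Suc j = 1" by simp
    hence "norm q ^ Suc j = 1" by (metis norm_one norm_power)
    moreover have "norm q ^ Suc j < 1" using assms rpow_Suc_lt1[of "norm q" j] by simp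
    ultimately show False by simp
  qed
  thus ?thesis unfolding qpoch_def by (simp add: prod_zero_iff)
qed

lemma geom_bound:
  fixes r :: real assumes "0 \<le> r" "r < 1"
  shows "(\<Sum>j<n. r ^ Suc j) \<le> r / (1 - r)"
proof -
  have "(\<Sum>j<n. r ^ Suc j) = r * (\<Sum>j<n. r ^ j)" by (simp add: sum_distrib_left)
  also have "(\<Sum>j<n. r ^ j) = (1 - r ^ n) / (1 - r)" using assms by (simp add: sum_gp_strict)
  also have "r * ((1 - r ^ n) / (1 - r)) \<le> r / (1 - r)"
  proof -
    have "r * r ^ n \<le> 1" using assms rpow_Suc_lt1[of r n] by simp
    hence "r * (1 - r ^ n) \<le> r" using assms by (simp add: algebra_simps)
    thus ?thesis using assms by (simp add: divide_right_mono)
  qed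
  finally show ?thesis .
qed

lemma qpoch_norm_le:
  assumes "norm q < 1"
  shows "norm (qpoch q q n) \<le> exp (norm q / (1 - norm q))"
proof -
  let ?r = "norm q"
  have "norm (qpoch q q n) \<le> (\<Prod>j<n. norm (1 - q * q ^ j))"
    unfolding qpoch_def by (rule norm_prod_le)
  also have "\<dots> \<le> (\<Prod>j<n. 1 + ?r ^ Suc j)"
    by (intro prod_mono conjI norm_ge_zero order.trans[OF norm_triangle_ineq4])
       (simp add: norm_mult norm_power)
  also have "\<dots> \<le> exp (\<Sum>j<n. ?r ^ Suc j)" by (rule prod_le_exp_sum) simp
  also have "\<dots> \<le> exp (?r / (1 - ?r))" using geom_bound[of ?r n] assms by simp
  finally show ?thesis .
qed

lemma one_minus_ge_exp:
  fixes x :: real assumes "0 \<le> x" "x < 1"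
  shows "exp (- (x / (1 - x))) \<le> 1 - x"
proof -
  have "1 + x / (1 - x) \<le> exp (x / (1 - x))" by (rule exp_ge_add_one_self)
  hence "1 / (1 - x) \<le> exp (x / (1 - x))" using assms by (simp add: field_simps)
  hence "inverse (exp (x / (1 - x))) \<le> 1 - x" using assms
    by (metis divide_pos_pos exp_gt_zero inverse_eq_divide le_imp_inverse_le inverse_inverse_eq zero_less_one diff_gt_0_iff_gt)
  thus ?thesis by (simp add: exp_minus)
qed

lemma qpoch_norm_ge:
  assumes "norm q < 1"
  shows "exp (- (norm q / (1 - norm q) ^ 2)) \<le> norm (qpoch q q n)"
proof -
  let ?r = "norm q"
  have r0: "0 \<le> ?r" by simp
  have "exp (- (norm q / (1 - norm q) ^ 2)) \<le> exp (- ((\<Sum>j<n. ?r ^ Suc j) / (1 - ?r)))"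
  proof -
    have "(\<Sum>j<n. ?r ^ Suc j) / (1 - ?r) \<le> (?r / (1 - ?r)) / (1 - ?r)"
      using geom_bound[of ?r n] assms by (intro divide_right_mono) simp_all
    also have "\<dots> = ?r / (1 - ?r) ^ 2" by (simp add: power2_eq_square)
    finally show ?thesis by simp
  qed
  also have "\<dots> = (\<Prod>j<n. exp (- (?r ^ Suc j / (1 - ?r))))"
    by (simp add: exp_sum[symmetric] sum_negf sum_divide_distrib)
  also have "\<dots> \<le> (\<Prod>j<n. norm (1 - q * q ^ j))"
  proof (intro prod_mono conjI)
    fix j assume "j \<in> {..<n}"
    have rj: "?r ^ Suc j < 1" "0 \<le> ?r ^ Suc j" using assms rpow_Suc_lt1[of ?r j] by simp_all
    have rjr: "?r ^ Suc j \<le> ?r" using assms rpow_Suc_lt1[of ?r j] by simp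
    have "exp (- (?r ^ Suc j / (1 - ?r))) \<le> exp (- (?r ^ Suc j / (1 - ?r ^ Suc j)))"
      using rj rjr assms by (simp add: frac_le)
    also have "\<dots> \<le> 1 - ?r ^ Suc j" by (rule one_minus_ge_exp[OF rj(2) rj(1)])
    also have "\<dots> \<le> norm (1 - q * q ^ j)"
      by (metis norm_one norm_power norm_triangle_ineq2 power_Suc)
    finally show "exp (- (?r ^ Suc j / (1 - ?r))) \<le> norm (1 - q * q ^ j)" .
  qed simp
  also have "\<dots> = norm (qpoch q q n)" unfolding qpoch_def by (simp add: prod_norm)
  finally show ?thesis .
qed

lemma qpoch_LIMSEQ:
  assumes "norm q < 1"
  shows "(\<lambda>n. qpoch q q n) \<longlonglongrightarrow> qpoch_inf q"
proof -
  let ?f = "\<lambda>j. 1 - q ^ Suc j"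
  have "summable (\<lambda>j. norm (?f j - 1))"
    using assms by (simp add: norm_power norm_mult summable_mult summable_geometric)
  hence "abs_convergent_prod ?f" by (rule summable_imp_abs_convergent_prod)
  hence cp: "convergent_prod ?f" by (rule abs_convergent_prod_imp_convergent_prod)
  have "(\<lambda>n. \<Prod>i\<le>n. ?f i) \<longlonglongrightarrow> qpoch_inf q"
    using convergent_prod_LIMSEQ[OF cp] unfolding qpoch_inf_def .
  moreover have "(\<Prod>i\<le>n. ?f i) = qpoch q q (Suc n)" for n
    unfolding qpoch_def by (simp add: lessThan_Suc_atMost)
  ultimately have "(\<lambda>n. qpoch q q (Suc n)) \<longlonglongrightarrow> qpoch_inf q" by simp
  thus ?thesis by (rule LIMSEQ_imp_Suc)
qed

lemma qpoch_inf_nz: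
  assumes "norm q < 1"
  shows "qpoch_inf q \<noteq> 0"
proof -
  let ?f = "\<lambda>j. 1 - q ^ Suc j"
  have "summable (\<lambda>j. norm (?f j - 1))"
    using assms by (simp add: norm_power norm_mult summable_mult summable_geometric)
  hence "abs_convergent_prod ?f" by (rule summable_imp_abs_convergent_prod)
  hence cp: "convergent_prod ?f" by (rule abs_convergent_prod_imp_convergent_prod)
  have "?f i \<noteq> 0" for i using qpoch_nz[OF assms, of "Suc (Suc i)"] 
    by (simp add: qpoch_Suc)
  thus ?thesis unfolding qpoch_inf_def using prodinf_nonzero[OF cp] by blast
qed



definition tri :: "nat \<Rightarrow> nat" where "tri n = n * (n - 1) div 2"

lemma tri_0[simp]: "tri 0 = 0" by (simp add: tri_def)
lemma tri_Suc: "tri (Suc n) = tri n + n"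
proof (cases n)
  case (Suc m)
  have "Suc n * n = n * (n - 1) + 2 * n" using Suc by simp
  thus ?thesis unfolding tri_def by simp
qed (simp add: tri_def)

lemma tri_int: "2 * int (tri n) = int n * int n - int n"
  by (induction n) (simp_all add: tri_Suc algebra_simps)

lemma kk_div: "k * (k + 1) div 2 = tri (Suc k)"
proof -
  have "2 * int (k * (k + 1) div 2) = int k * int k + int k"
  proof -
    have "even (k * (k + 1))" by simp
    hence "2 * (k * (k + 1) div 2) = k * (k + 1)" by simp
    hence "2 * int (k * (k + 1) div 2) = int (k * (k + 1))" by linarith
    thus ?thesis by (simp add: algebra_simps)
  qed
  moreover have "2 * int (tri (Suc k)) = int k * int k + int k"
    using tri_int[of "Suc k"] by (simp add: algebra_simps)
  ultimately show ?thesis by simp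
qed

definition qbin :: "complex \<Rightarrow> nat \<Rightarrow> nat \<Rightarrow> complex" where
  "qbin q k r = (if r \<le> k then qpoch q q k / (qpoch q q r * qpoch q q (k - r)) else 0)"

lemma qbin_0: assumes q: "norm q < 1" shows "qbin q k 0 = 1" 
  using qpoch_nz[OF q, of k] by (simp add: qbin_def) 

lemma frac_aux:
  fixes P R B x y u :: complex
  assumes "R \<noteq> 0" "x \<noteq> 0" "B \<noteq> 0" "y \<noteq> 0"
  shows "P * (u * y + x) / (R * x * (B * y)) = u * (P / (R * x * B)) + P / (R * (B * y))"
  using assms by (simp add: field_simps)

lemma qbin_diag: assumes q: "norm q < 1" shows "qbin q k k = 1"
  using qpoch_nz[OF q, of k] by (simp add: qbin_def)

lemma qbin_pascal:
  assumes q: "norm q < 1"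
  shows "qbin q (Suc k) (Suc r) = q ^ Suc r * qbin q k (Suc r) + qbin q k r"
proof (cases "Suc r \<le> k")
  case True
  then obtain b where k: "k = Suc r + b" using le_Suc_ex by blast
  have nz: "qpoch q q j \<noteq> 0" for j using qpoch_nz[OF q] .
  have nz1: "1 - q ^ Suc j \<noteq> 0" for j
    using qpoch_nz[OF q, of "Suc j"] by (simp add: qpoch_Suc)
  have e1: "qpoch q q (Suc k) = qpoch q q k * (1 - q ^ Suc k)" by (rule qpoch_qq_Suc)
  have e2: "qpoch q q (Suc r) = qpoch q q r * (1 - q ^ Suc r)" by (rule qpoch_qq_Suc)
  have e3: "qpoch q q (Suc b) = qpoch q q b * (1 - q ^ Suc b)" by (rule qpoch_qq_Suc)
  have key: "1 - q ^ Suc k = q ^ Suc r * (1 - q ^ Suc b) + (1 - q ^ Suc r)"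
    using k by (simp add: algebra_simps power_add)
  have d1: "Suc k - Suc r = Suc b" "k - Suc r = b" "k - r = Suc b" "Suc r \<le> Suc k" "r \<le> k" "Suc r \<le> k"
    using k by auto
  have "qbin q (Suc k) (Suc r) = qpoch q q k * (1 - q ^ Suc k) / (qpoch q q r * (1 - q ^ Suc r) * (qpoch q q b * (1 - q ^ Suc b)))"
    by (simp only: qbin_def d1 if_True e1 e2 e3)
  also have "\<dots> = q ^ Suc r * (qpoch q q k / (qpoch q q r * (1 - q ^ Suc r) * qpoch q q b)) + qpoch q q k / (qpoch q q r * (qpoch q q b * (1 - q ^ Suc b)))"
    unfolding key by (rule frac_aux[OF nz nz1 nz nz1])
  also have "\<dots> = q ^ Suc r * qbin q k (Suc r) + qbin q k r"
    by (simp only: qbin_def d1 if_True e2 e3 diff_Suc_Suc)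
  finally show ?thesis .
next
  case False
  show ?thesis
  proof (cases "r = k")
    case True thus ?thesis using qbin_diag[OF q] by (simp add: qbin_def)
  next
    case False
    with \<open>\<not> Suc r \<le> k\<close> show ?thesis by (simp add: qbin_def)
  qed
qed

lemma qbinomial:
  assumes q: "norm q < 1"
  shows "qpoch z q k = (\<Sum>r\<le>k. qbin q k r * ((-1) ^ r * q ^ tri r * z ^ r))"
proof (induction k arbitrary: z)
  case 0 thus ?case by (simp add: qbin_0[OF q])
next
  case (Suc k)
  define A where "A r = qbin q k r * ((-1) ^ r * q ^ tri r * (z * q) ^ r)" for r
  have IH: "qpoch (z * q) q k = (\<Sum>r\<le>k. A r)" unfolding A_def by (rule Suc.IH)
  have A0: "A 0 = 1" by (simp add: A_def qbin_0[OF q])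
  have Ak: "A (Suc k) = 0" by (simp add: A_def qbin_def)
  have s1: "(\<Sum>r\<le>k. A (Suc r)) = (\<Sum>r\<le>k. A r) - 1"
  proof -
    have "(\<Sum>r\<le>Suc k. A r) = A 0 + (\<Sum>r\<le>k. A (Suc r))" by (rule sum.atMost_Suc_shift)
    moreover have "(\<Sum>r\<le>Suc k. A r) = (\<Sum>r\<le>k. A r) + A (Suc k)" by simp
    ultimately show ?thesis using A0 Ak by simp
  qed
  have "(\<Sum>r\<le>Suc k. qbin q (Suc k) r * ((-1) ^ r * q ^ tri r * z ^ r))
      = 1 + (\<Sum>r\<le>k. qbin q (Suc k) (Suc r) * ((-1) ^ Suc r * q ^ tri (Suc r) * z ^ Suc r))"
    by (subst sum.atMost_Suc_shift) (simp add: qbin_0[OF q])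
  also have "\<dots> = 1 + (\<Sum>r\<le>k. A (Suc r)) + (\<Sum>r\<le>k. - z * A r)"
    unfolding qbin_pascal[OF q] sum.distrib[symmetric] add.assoc
    by (intro arg_cong2[where f="(+)"] refl sum.cong)
       (simp_all add: A_def tri_Suc power_add power_mult_distrib algebra_simps)
  also have "\<dots> = (1 - z) * qpoch (z * q) q k"
    unfolding s1 IH sum_distrib_left[symmetric] by (simp add: algebra_simps)
  also have "\<dots> = qpoch z q (Suc k)" by (simp add: qpoch_Suc_shift)
  finally show ?case ..
qed



definition gt :: "complex \<Rightarrow> int \<Rightarrow> nat \<Rightarrow> complex" where
  "gt q d s = (-1) ^ s * q powi (int (tri s) + int s * d) / qpoch q q s"

definition GG :: "complex \<Rightarrow> int \<Rightarrow> complex" where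
  "GG q d = suminf (gt q d)"

lemma powi_add_nat: "(q::complex) \<noteq> 0 \<Longrightarrow> q powi (a + int n) = q powi a * q ^ n"
  using power_int_add[of q a "int n"] by simp

lemma gt_Suc:
  assumes q0: "q \<noteq> 0"
  shows "gt q d (Suc s) = gt q d s * (- (q powi (int s + d)) / (1 - q ^ Suc s))"
proof -
  have "int (tri (Suc s)) + int (Suc s) * d = (int (tri s) + int s * d) + (int s + d)"
    by (simp add: tri_Suc algebra_simps)
  hence "q powi (int (tri (Suc s)) + int (Suc s) * d) = q powi (int (tri s) + int s * d) * q powi (int s + d)"
    using q0 by (simp add: power_int_add)
  thus ?thesis unfolding gt_def by (simp add: qpoch_qq_Suc)
qed

lemma gt_summable:
  assumes q: "norm q < 1" and q0: "q \<noteq> 0"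
  shows "summable (\<lambda>s. norm (gt q d s))"
proof -
  let ?r = "norm q"
  have r0: "0 < ?r" using q0 by simp
  have "(\<lambda>s. ?r ^ s * (?r powi d) / (1 - ?r)) \<longlonglongrightarrow> 0 * (?r powi d) / (1 - ?r)"
    by (intro tendsto_intros LIMSEQ_power_zero) (use q r0 in auto)
  hence "eventually (\<lambda>s. ?r ^ s * (?r powi d) / (1 - ?r) < 1/2) sequentially"
    by (intro order_tendstoD(2)) auto
  then obtain N where N: "\<And>s. s \<ge> N \<Longrightarrow> ?r ^ s * (?r powi d) / (1 - ?r) < 1/2"
    unfolding eventually_sequentially by blast
  show ?thesis
  proof (rule summable_ratio_test[where c="1/2" and N=N])
    fix s assume s: "N \<le> s"
    have den: "1 - ?r \<le> norm (1 - q ^ Suc s)"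
    proof -
      have "?r ^ Suc s \<le> ?r" using rpow_Suc_lt1[of ?r s] q by simp
      moreover have "1 - ?r ^ Suc s \<le> norm (1 - q ^ Suc s)"
        by (metis norm_one norm_power norm_triangle_ineq2)
      ultimately show ?thesis by simp
    qed
    have pos: "0 < 1 - ?r" using q by simp
    have "norm (norm (gt q d (Suc s))) = norm (gt q d s) * (?r powi (int s + d) / norm (1 - q ^ Suc s))"
      by (simp add: gt_Suc[OF q0] norm_mult norm_divide norm_power_int)
    also have "\<dots> \<le> norm (gt q d s) * (?r powi (int s + d) / (1 - ?r))"
      by (intro mult_left_mono divide_left_mono den) (use pos r0 den in \<open>auto intro!: mult_pos_pos\<close>)
    also have "?r powi (int s + d) = ?r ^ s * ?r powi d" using r0 by (simp add: power_int_add)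
    also have "norm (gt q d s) * (?r ^ s * ?r powi d / (1 - ?r)) \<le> norm (gt q d s) * (1/2)"
      using N[OF s] by (intro mult_left_mono) auto
    finally show "norm (norm (gt q d (Suc s))) \<le> 1/2 * norm (norm (gt q d s))" by simp
  qed simp
qed

lemma gt_sums:
  assumes q: "norm q < 1" and q0: "q \<noteq> 0"
  shows "gt q d sums GG q d"
  unfolding GG_def by (rule summable_sums[OF summable_norm_cancel[OF gt_summable[OF q q0]]])

lemma GG_rec:
  assumes q: "norm q < 1" and q0: "q \<noteq> 0"
  shows "GG q d = (1 - q powi d) * GG q (d + 1)"
proof -
  define h where "h s = gt q d s - gt q (d + 1) s" for s
  have hs: "h sums (GG q d - GG q (d + 1))"
    unfolding h_def by (intro sums_diff gt_sums q q0)
  have hSuc: "h (Suc s) = - (q powi d) * gt q (d + 1) s" for s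
  proof -
    define X where "X = q powi (int (tri s) + int s * d)"
    have e1: "q powi (int (tri (Suc s)) + int (Suc s) * d) = X * q powi d * q ^ s"
    proof -
      have "int (tri (Suc s)) + int (Suc s) * d = (int (tri s) + int s * d) + d + int s"
        by (simp add: tri_Suc algebra_simps)
      thus ?thesis using q0 unfolding X_def by (simp add: power_int_add)
    qed
    have e2: "q powi (int (tri (Suc s)) + int (Suc s) * (d + 1)) = X * q powi d * q ^ s * q ^ Suc s"
    proof -
      have "int (tri (Suc s)) + int (Suc s) * (d + 1) = ((int (tri s) + int s * d) + d) + int (s + Suc s)"
        by (simp add: tri_Suc algebra_simps)
      hence "q powi (int (tri (Suc s)) + int (Suc s) * (d + 1)) = q powi ((int (tri s) + int s * d) + d) * q ^ (s + Suc s)"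
        using powi_add_nat[OF q0, of "int (tri s) + int s * d + d" "s + Suc s"] by simp
      thus ?thesis using q0 unfolding X_def by (simp add: power_int_add power_add mult_ac)
    qed
    have e3: "q powi (int (tri s) + int s * (d + 1)) = X * q ^ s"
    proof -
      have "int (tri s) + int s * (d + 1) = (int (tri s) + int s * d) + int s"
        by (simp add: algebra_simps)
      thus ?thesis using q0 unfolding X_def by (simp add: power_int_add)
    qed
    have nz: "qpoch q q s \<noteq> 0" "1 - q ^ Suc s \<noteq> 0"
      using qpoch_nz[OF q, of s] qpoch_nz[OF q, of "Suc s"] by (auto simp: qpoch_qq_Suc)
    have aux2: "(- a) * Y / (P * (1 - u)) - (- a) * (Y * u) / (P * (1 - u)) = - (a * Y / P)"
      if "P \<noteq> 0" "1 - u \<noteq> 0" for a Y P u :: complex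
    proof -
      have "(- a) * Y / (P * (1 - u)) - (- a) * (Y * u) / (P * (1 - u)) = ((- a * Y) * (1 - u)) / (P * (1 - u))"
        by (simp add: diff_divide_distrib[symmetric] algebra_simps)
      also have "\<dots> = - (a * Y / P)" using that by simp
      finally show ?thesis .
    qed
    have "h (Suc s) = (- ((-1) ^ s)) * (X * q powi d * q ^ s) / (qpoch q q s * (1 - q ^ Suc s))
         - (- ((-1) ^ s)) * ((X * q powi d * q ^ s) * q ^ Suc s) / (qpoch q q s * (1 - q ^ Suc s))"
      unfolding h_def gt_def e1 e2 qpoch_qq_Suc by simp
    also have "\<dots> = - ((-1) ^ s * (X * q powi d * q ^ s) / qpoch q q s)"
      by (rule aux2[OF nz])
    also have "\<dots> = - (q powi d) * gt q (d + 1) s"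
      unfolding gt_def e3 by (simp add: mult_ac)
    finally show ?thesis .
  qed
  have "(\<lambda>s. h (Suc s)) sums (- (q powi d) * GG q (d + 1))"
    unfolding hSuc by (intro sums_mult gt_sums q q0)
  moreover have "h 0 = 0" by (simp add: h_def gt_def)
  ultimately have "h sums (- (q powi d) * GG q (d + 1))" by (rule sums_Suc_imp[rotated])
  with hs have "GG q d - GG q (d + 1) = - (q powi d) * GG q (d + 1)" using sums_unique2 by blast
  thus ?thesis by (simp add: algebra_simps)
qed

lemma GG_lim:
  assumes q: "norm q < 1" and q0: "q \<noteq> 0"
  shows "(\<lambda>n. GG q (int n)) \<longlonglongrightarrow> 1"
proof -
  let ?r = "norm q"
  define c0 where "c0 = exp (- (?r / (1 - ?r) ^ 2))"
  have c0: "0 < c0" "\<And>n. c0 \<le> norm (qpoch q q n)" unfolding c0_def using qpoch_norm_ge[OF q] by auto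
  have r0: "0 < ?r" "?r < 1" using q q0 by auto
  have bound: "norm (GG q (int n) - 1) \<le> ?r ^ n / (c0 * (1 - ?r))" if n: "n \<ge> 1" for n
  proof -
    have sm: "summable (\<lambda>s. norm (gt q (int n) s))" by (rule gt_summable[OF q q0])
    have sm1: "summable (\<lambda>s. norm (gt q (int n) (Suc s)))"
      using sm by (subst summable_Suc_iff)
    have g0: "gt q (int n) 0 = 1" by (simp add: gt_def)
    have "GG q (int n) - 1 = (\<Sum>s. gt q (int n) (Suc s))"
      unfolding GG_def using suminf_split_head[OF summable_norm_cancel[OF sm]] g0
      by simp
    also have "norm \<dots> \<le> (\<Sum>s. norm (gt q (int n) (Suc s)))" by (rule summable_norm[OF sm1])
    also have "\<dots> \<le> (\<Sum>s. ?r ^ n * ?r ^ s / c0)"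
    proof (rule suminf_le)
      show "summable (\<lambda>s. ?r ^ n * ?r ^ s / c0)"
        using r0 by (intro summable_divide summable_mult summable_geometric) auto
      show "summable (\<lambda>s. norm (gt q (int n) (Suc s)))" by (rule sm1)
      fix s
      have "norm (gt q (int n) (Suc s)) = ?r ^ (tri (Suc s) + Suc s * n) / norm (qpoch q q (Suc s))"
      proof -
        have "int (tri (Suc s)) + int (Suc s) * int n = int (tri (Suc s) + Suc s * n)" by (simp add: algebra_simps)
        thus ?thesis unfolding gt_def by (simp add: norm_mult norm_divide norm_power_int norm_power del: of_nat_add of_nat_mult)
      qed
      also have "\<dots> \<le> ?r ^ (n + s) / c0"
      proof (rule frac_le)
        show "?r ^ (tri (Suc s) + Suc s * n) \<le> ?r ^ (n + s)"
        proof (rule power_decreasing)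
          have "s \<le> s * n" using n by simp
          thus "n + s \<le> tri (Suc s) + Suc s * n" by (simp add: trans_le_add2)
        qed (use r0 in auto)
      qed (use c0 r0 in auto)
      finally show "norm (gt q (int n) (Suc s)) \<le> ?r ^ n * ?r ^ s / c0" by (simp add: power_add)
    qed
    also have "\<dots> = ?r ^ n / (c0 * (1 - ?r))"
    proof -
      have "(\<lambda>s. ?r ^ n * ?r ^ s / c0) sums (?r ^ n * (1 / (1 - ?r)) / c0)"
        using r0 by (intro sums_divide sums_mult geometric_sums) auto
      thus ?thesis using c0 r0 by (simp add: sums_iff field_simps)
    qed
    finally show ?thesis .
  qed
  have lim0: "(\<lambda>n. ?r ^ n / (c0 * (1 - ?r))) \<longlonglongrightarrow> 0"
    using tendsto_divide_zero[OF LIMSEQ_power_zero[of ?r], of "c0 * (1 - ?r)"] r0 by simp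
  have "(\<lambda>n. GG q (int n) - 1) \<longlonglongrightarrow> 0"
  proof (rule Lim_null_comparison[OF _ lim0])
    show "eventually (\<lambda>n. norm (GG q (int n) - 1) \<le> ?r ^ n / (c0 * (1 - ?r))) sequentially"
      using bound by (intro eventually_sequentiallyI[of 1]) simp
  qed
  thus ?thesis by (simp add: LIM_zero_iff)
qed

lemma GG_prod:
  assumes q: "norm q < 1" and q0: "q \<noteq> 0"
  shows "GG q 1 = qpoch q q e * GG q (int e + 1)"
proof (induction e)
  case 0 thus ?case by simp
next
  case (Suc e)
  have "GG q (int e + 1) = (1 - q ^ Suc e) * GG q (int (Suc e) + 1)"
    using GG_rec[OF q q0, of "int e + 1"] by (simp add: add.commute power_int_of_nat[symmetric] del: power_int_of_nat)
  thus ?case using Suc by (simp add: qpoch_qq_Suc mult_ac)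
qed

lemma GG_1:
  assumes q: "norm q < 1" and q0: "q \<noteq> 0"
  shows "GG q 1 = qpoch_inf q"
proof -
  have "(\<lambda>e. GG q (int (Suc e))) \<longlonglongrightarrow> 1" using GG_lim[OF q q0] by (rule LIMSEQ_Suc)
  hence "(\<lambda>e. qpoch q q e * GG q (int e + 1)) \<longlonglongrightarrow> qpoch_inf q * 1"
    by (intro tendsto_mult qpoch_LIMSEQ q) (simp add: add.commute)
  hence "(\<lambda>e. GG q 1) \<longlonglongrightarrow> qpoch_inf q" using GG_prod[OF q q0] by simp
  thus ?thesis by (simp add: LIMSEQ_const_iff)
qed

lemma GG_pos:
  assumes q: "norm q < 1" and q0: "q \<noteq> 0"
  shows "GG q (int e + 1) = qpoch_inf q / qpoch q q e"
  using GG_prod[OF q q0, of e] GG_1[OF q q0] qpoch_nz[OF q, of e] by (simp add: field_simps)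

lemma GG_nonpos:
  assumes q: "norm q < 1" and q0: "q \<noteq> 0" and d: "d \<le> 0"
  shows "GG q d = 0"
proof -
  have "GG q (- int j) = 0" for j
  proof (induction j)
    case 0 thus ?case using GG_rec[OF q q0, of 0] by simp
  next
    case (Suc j)
    thus ?case using GG_rec[OF q q0, of "- int (Suc j)"] by simp
  qed
  from this[of "nat (- d)"] d show ?thesis by simp
qed

lemma GG_has_sum:
  assumes q: "norm q < 1" and q0: "q \<noteq> 0"
  shows "(gt q d has_sum (if d \<ge> 1 then qpoch_inf q / qpoch q q (nat (d - 1)) else 0)) UNIV"
proof -
  have "(gt q d has_sum GG q d) UNIV"
    by (rule norm_summable_imp_has_sum[OF gt_summable[OF q q0] gt_sums[OF q q0]])
  moreover have "GG q d = (if d \<ge> 1 then qpoch_inf q / qpoch q q (nat (d - 1)) else 0)"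
  proof (cases "d \<ge> 1")
    case True
    then obtain e where e: "d = int e + 1" by (metis add.commute zle_iff_zadd)
    thus ?thesis using True GG_pos[OF q q0, of e] by simp
  next
    case False thus ?thesis using GG_nonpos[OF q q0, of d] by simp
  qed
  ultimately show ?thesis by simp
qed



lemma pair_summable:
  fixes g :: "nat \<times> nat \<Rightarrow> complex" and \<rho> K :: real
  assumes "0 \<le> \<rho>" "\<rho> < 1" and bnd: "\<And>x y. norm (g (x, y)) \<le> K * \<rho> ^ x * \<rho> ^ y"
  shows "g summable_on UNIV"
proof -
  have K: "0 \<le> K" using order.trans[OF norm_ge_zero bnd[of 0 0]] by simp
  define f where "f = (\<lambda>(x, y). K * \<rho> ^ x * \<rho> ^ y)"
  have geo: "((\<lambda>y. c * \<rho> ^ y) has_sum (c / (1 - \<rho>))) UNIV" if "0 \<le> c" for c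
  proof (rule sums_nonneg_imp_has_sum_strong)
    show "(\<lambda>y. c * \<rho> ^ y) sums (c / (1 - \<rho>))"
      using assms geometric_sums[of \<rho>] sums_mult[of _ "1/(1-\<rho>)" c] by (simp add: field_simps)
  qed (use assms that in auto)
  have "f summable_on Sigma UNIV (\<lambda>_. UNIV)"
  proof (rule summable_on_SigmaI)
    show "((\<lambda>y. f (x, y)) has_sum (K * \<rho> ^ x / (1 - \<rho>))) UNIV" for x
      unfolding f_def using geo[of "K * \<rho> ^ x"] K assms by simp
    show "(\<lambda>x. K * \<rho> ^ x / (1 - \<rho>)) summable_on UNIV"
      using geo[of "K / (1 - \<rho>)"] K assms unfolding summable_on_def by (auto simp: field_simps)
  qed (use K assms in \<open>auto simp: f_def\<close>)
  hence fs: "f summable_on UNIV" by simp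
  have "(\<lambda>xy. norm (g xy)) summable_on UNIV"
  proof (rule summable_on_comparison_test[OF fs])
    fix xy :: "nat \<times> nat" 
    obtain x y where xy: "xy = (x, y)" by force
    show "norm (g xy) \<le> f xy" unfolding xy f_def using bnd[of x y] by simp
  qed simp
  thus ?thesis by (simp add: summable_on_iff_abs_summable_on_complex)
qed

lemma powi_bound:
  fixes r :: real
  assumes r: "0 < r" "r < 1" and e: "int x + int y \<le> 2 * e + 2 * int C"
  shows "r powi e \<le> sqrt r ^ x * sqrt r ^ y / r ^ C"
proof -
  let ?s = "sqrt r"
  have s: "0 < ?s" "?s \<le> 1" using r by auto
  have rr: "r = ?s ^ 2" using r by simp
  have "r powi e = ?s powi (2 * e)" by (subst rr) (simp add: power_int_power)
  also have "\<dots> \<le> ?s powi (int x + int y - 2 * int C)"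
    using s e by (intro power_int_decreasing) auto
  also have "\<dots> = ?s ^ x * ?s ^ y / ?s powi (2 * int C)"
    using s by (simp add: power_int_diff power_int_add)
  also have "?s powi (2 * int C) = r ^ C"
  proof -
    have "?s powi (2 * int C) = ?s ^ (2 * C)" by (metis of_nat_mult of_nat_numeral power_int_of_nat)
    also have "\<dots> = (?s ^ 2) ^ C" by (simp add: power_mult)
    finally show ?thesis using r by simp
  qed
  finally show ?thesis .
qed

lemma shift_has_sum:
  fixes f :: "nat \<Rightarrow> complex"
  shows "((\<lambda>k. if r \<le> k then f (k - r) else 0) has_sum x) UNIV \<longleftrightarrow> (f has_sum x) UNIV"
proof -
  have inj: "inj_on ((+) r) UNIV" by simp
  have img: "(+) r ` UNIV = {r..}" by (auto simp: image_iff le_iff_add)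
  have "((\<lambda>k. if r \<le> k then f (k - r) else 0) has_sum x) UNIV \<longleftrightarrow>
        ((\<lambda>k. if r \<le> k then f (k - r) else 0) has_sum x) {r..}"
    by (rule has_sum_cong_neutral) auto
  also have "\<dots> \<longleftrightarrow> (((\<lambda>k. if r \<le> k then f (k - r) else 0) \<circ> (+) r) has_sum x) UNIV"
    using has_sum_reindex[OF inj, of "\<lambda>k. if r \<le> k then f (k - r) else 0" x] img by simp
  also have "((\<lambda>k. if r \<le> k then f (k - r) else 0) \<circ> (+) r) = f" by (auto simp: fun_eq_iff)
  finally show ?thesis .
qed

lemma fin_has_sum:
  fixes f :: "nat \<Rightarrow> complex"
  shows "((\<lambda>r. if r \<le> k then f r else 0) has_sum (\<Sum>r\<le>k. f r)) UNIV"
proof -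
  have "((\<lambda>r. if r \<le> k then f r else 0) has_sum (\<Sum>r\<le>k. f r)) {..k}"
    by (rule has_sum_finiteI) auto
  moreover have "((\<lambda>r. if r \<le> k then f r else 0) has_sum (\<Sum>r\<le>k. f r)) {..k} \<longleftrightarrow>
                 ((\<lambda>r. if r \<le> k then f r else 0) has_sum (\<Sum>r\<le>k. f r)) UNIV"
    by (rule has_sum_cong_neutral) auto
  ultimately show ?thesis by simp
qed



lemma ineq3: fixes r s n t :: int assumes "2 * t = s * s - s" "0 \<le> r" "0 \<le> s" "0 \<le> n"
  shows "(r + s) + r \<le> 2 * (r * r + r + t + s * (r - n + 1)) + 2 * (n * n)"
proof -
  have e: "2 * (r * r + r + t + s * (r - n + 1)) + 2 * (n * n) - ((r + s) + r) = 2 * (r * r) + 2 * (s * r) + (s - n) * (s - n) + n * n"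
    using assms(1) by algebra
  have "0 \<le> 2 * (r * r) + 2 * (s * r) + (s - n) * (s - n) + n * n" using assms by simp
  thus ?thesis using e by linarith
qed

lemma ex_int: fixes r s n t1 t2 t3 u :: int
  assumes "u = r + s + 1" "2 * t1 = u * u - u" "2 * t2 = r * r - r" "2 * t3 = s * s - s"
  shows "t1 - n * (r + s) + t2 + (n + 1) * r = (r * r + r) + (t3 + s * (r - n + 1))"
  using assms by algebra

definition tt :: "complex \<Rightarrow> nat \<Rightarrow> nat \<Rightarrow> complex" where
  "tt q n k = (-1) ^ k * q powi (int (k * (k + 1) div 2) - int n * int k) * qpoch q q (n + k) / qpoch q q k"

definition hh :: "complex \<Rightarrow> nat \<Rightarrow> nat \<Rightarrow> nat \<Rightarrow> complex" where
  "hh q n r s = q ^ (r * r + r) / qpoch q q r * gt q (int r - int n + 1) s"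

definition ww :: "complex \<Rightarrow> nat \<Rightarrow> nat \<Rightarrow> complex" where
  "ww q n i = q ^ ((n + i) * (n + i) + (n + i)) / (qpoch q q (n + i) * qpoch q q i)"

lemma tt_expand:
  assumes q: "norm q < 1" and q0: "q \<noteq> 0"
  shows "tt q n k = qpoch q q n * (\<Sum>r\<le>k. hh q n r (k - r))"
proof -
  have "tt q n k = qpoch q q n * (\<Sum>r\<le>k. (-1) ^ k * q powi (int (k * (k + 1) div 2) - int n * int k)
           * (qbin q k r * ((-1) ^ r * q ^ tri r * (q ^ Suc n) ^ r)) / qpoch q q k)"
    unfolding tt_def qpoch_add qbinomial[OF q, of "q ^ Suc n" k]
    by (simp add: sum_distrib_left sum_divide_distrib mult_ac)
  also have "(\<Sum>r\<le>k. (-1) ^ k * q powi (int (k * (k + 1) div 2) - int n * int k)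
           * (qbin q k r * ((-1) ^ r * q ^ tri r * (q ^ Suc n) ^ r)) / qpoch q q k)
        = (\<Sum>r\<le>k. hh q n r (k - r))"
  proof (rule sum.cong[OF refl])
    fix r assume "r \<in> {..k}"
    then obtain s where k: "k = r + s" using le_Suc_ex by auto
    have ks: "k - r = s" using k by simp
    have nz: "qpoch q q j \<noteq> 0" for j using qpoch_nz[OF q] .
    have qb: "qbin q k r = qpoch q q k / (qpoch q q r * qpoch q q s)"
      unfolding qbin_def using k by simp
    have sg: "(-1::complex) ^ k * (-1) ^ r = (-1) ^ s"
      unfolding k by (simp add: power_add mult_ac flip: power2_eq_square)
    define B where "B = int (tri s) + int s * (int r - int n + 1)"
    have ex: "(int (tri (Suc k)) - int n * int k) + int (tri r) + int (Suc n * r) = int (r * r + r) + B"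
      unfolding B_def k
      using ex_int[of "int (Suc (r + s))" "int r" "int s" "int (tri (Suc (r + s)))" "int (tri r)" "int (tri s)" "int n"]
        tri_int[of "Suc (r + s)"] tri_int[of r] tri_int[of s]
      by (simp add: algebra_simps)
    have pw: "q powi (int (k * (k + 1) div 2) - int n * int k) * q ^ tri r * (q ^ Suc n) ^ r
              = q ^ (r * r + r) * q powi B"
    proof -
      have A: "int (k * (k + 1) div 2) = int (tri (Suc k))" by (simp only: kk_div)
      have f1: "q powi ((int (tri (Suc k)) - int n * int k) + int (tri r) + int (Suc n * r))
          = q powi (int (tri (Suc k)) - int n * int k) * q ^ tri r * q ^ (Suc n * r)"
        using powi_add_nat[OF q0, of "(int (tri (Suc k)) - int n * int k) + int (tri r)" "Suc n * r"]
              powi_add_nat[OF q0, of "int (tri (Suc k)) - int n * int k" "tri r"] by simp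
      have f2: "q powi (int (r * r + r) + B) = q ^ (r * r + r) * q powi B"
        using powi_add_nat[OF q0, of B "r * r + r"] by (simp add: add.commute mult.commute)
      have "q powi (int (k * (k + 1) div 2) - int n * int k) * q ^ tri r * (q ^ Suc n) ^ r
          = q powi (int (tri (Suc k)) - int n * int k) * q ^ tri r * q ^ (Suc n * r)"
        unfolding A by (simp only: power_mult)
      also have "\<dots> = q powi ((int (tri (Suc k)) - int n * int k) + int (tri r) + int (Suc n * r))"
        using f1 by simp
      also have "\<dots> = q powi (int (r * r + r) + B)" unfolding ex ..
      also have "\<dots> = q ^ (r * r + r) * q powi B" by (rule f2)
      finally show ?thesis .
    qed
    have "(-1) ^ k * q powi (int (k * (k + 1) div 2) - int n * int k)
           * (qbin q k r * ((-1) ^ r * q ^ tri r * (q ^ Suc n) ^ r)) / qpoch q q k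
        = ((-1) ^ k * (-1) ^ r) * (q powi (int (k * (k + 1) div 2) - int n * int k) * q ^ tri r * (q ^ Suc n) ^ r)
           / (qpoch q q r * qpoch q q s)"
      unfolding qb using nz[of k] by (simp add: field_simps)
    also have "\<dots> = hh q n r s"
      unfolding sg pw hh_def gt_def B_def by (simp add: field_simps)
    finally show "(-1) ^ k * q powi (int (k * (k + 1) div 2) - int n * int k)
           * (qbin q k r * ((-1) ^ r * q ^ tri r * (q ^ Suc n) ^ r)) / qpoch q q k = hh q n r (k - r)"
      unfolding ks .
  qed
  finally show ?thesis .
qed

lemma hh_norm:
  assumes q: "norm q < 1" and q0: "q \<noteq> 0"
  shows "norm (hh q n r s) \<le> (1 / (exp (- (norm q / (1 - norm q) ^ 2)) ^ 2 * norm q ^ (n * n)))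
            * sqrt (norm q) ^ (r + s) * sqrt (norm q) ^ r"
proof -
  let ?r = "norm q"
  define c0 where "c0 = exp (- (?r / (1 - ?r) ^ 2))"
  have c0: "0 < c0" "\<And>n. c0 \<le> norm (qpoch q q n)" unfolding c0_def using qpoch_norm_ge[OF q] by auto
  have r0: "0 < ?r" "?r < 1" using q q0 by auto
  define E where "E = int (r * r + r) + (int (tri s) + int s * (int r - int n + 1))"
  have "norm (hh q n r s) = ?r powi E / (norm (qpoch q q r) * norm (qpoch q q s))"
    unfolding hh_def gt_def E_def using r0
    by (simp add: norm_mult norm_divide norm_power norm_power_int power_int_add flip: power_int_of_nat)
  also have "\<dots> \<le> ?r powi E / (c0 * c0)"
    using c0 r0 by (intro divide_left_mono mult_mono) (auto intro!: mult_pos_pos less_le_trans[OF c0(1) c0(2)])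
  also have "?r powi E \<le> sqrt ?r ^ (r + s) * sqrt ?r ^ r / ?r ^ (n * n)"
  proof (rule powi_bound[OF r0])
    show "int (r + s) + int r \<le> 2 * E + 2 * int (n * n)"
      unfolding E_def using ineq3[where r="int r" and s="int s" and n="int n" and t="int (tri s)"] tri_int[of s] by simp
  qed
  hence "?r powi E / (c0 * c0) \<le> (sqrt ?r ^ (r + s) * sqrt ?r ^ r / ?r ^ (n * n)) / (c0 * c0)"
    using c0 by (intro divide_right_mono) auto
  finally show ?thesis unfolding c0_def by (simp add: power2_eq_square field_simps)
qed

lemma L3:
  assumes q: "norm q < 1" and q0: "q \<noteq> 0"
  shows "\<exists>S. (tt q n has_sum qpoch q q n * S) UNIV \<and> ((\<lambda>i. qpoch_inf q * ww q n i) has_sum S) UNIV"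
proof -
  let ?r = "norm q"
  define gh where "gh = (\<lambda>(k, r). if r \<le> k then hh q n r (k - r) else 0)"
  define K where "K = 1 / (exp (- (norm q / (1 - norm q) ^ 2)) ^ 2 * norm q ^ (n * n))"
  have r0: "0 < ?r" "?r < 1" using q q0 by auto
  have K0: "0 \<le> K" unfolding K_def by simp
  have "gh summable_on UNIV"
  proof (rule pair_summable[where \<rho>="sqrt ?r" and K=K])
    fix k r
    show "norm (gh (k, r)) \<le> K * sqrt ?r ^ k * sqrt ?r ^ r"
    proof (cases "r \<le> k")
      case True
      then obtain s where k: "k = r + s" using le_Suc_ex by auto
      show ?thesis using hh_norm[OF q q0, of n r s] True unfolding gh_def K_def k by simp
    next
      case False thus ?thesis unfolding gh_def using K0 by simp
    qed
  qed (use r0 in auto)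
  then obtain S where S: "(gh has_sum S) UNIV" using summable_on_def by blast
  have S1: "((\<lambda>k. \<Sum>r\<le>k. hh q n r (k - r)) has_sum S) UNIV"
  proof (rule has_sum_SigmaD[where B="\<lambda>_. UNIV"])
    show "(gh has_sum S) (Sigma UNIV (\<lambda>_. UNIV))" using S by simp
    fix k :: nat
    show "((\<lambda>r. gh (k, r)) has_sum (\<Sum>r\<le>k. hh q n r (k - r))) UNIV"
      unfolding gh_def using fin_has_sum[of k "\<lambda>r. hh q n r (k - r)"] by simp
  qed
  define Gv where "Gv r = (if int r - int n + 1 \<ge> 1 then qpoch_inf q / qpoch q q (nat (int r - int n + 1 - 1)) else 0)" for r
  have S2: "((\<lambda>r. q ^ (r * r + r) / qpoch q q r * Gv r) has_sum S) UNIV"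
  proof (rule has_sum_SigmaD[where B="\<lambda>_. UNIV"])
    show "((\<lambda>(r, k). gh (k, r)) has_sum S) (Sigma UNIV (\<lambda>_. UNIV))" 
      using S has_sum_swap[where f=gh and S=S and A=UNIV and B=UNIV] by simp
    fix r :: nat
    have "((\<lambda>s. hh q n r s) has_sum (q ^ (r * r + r) / qpoch q q r * Gv r)) UNIV"
      unfolding Gv_def hh_def by (intro has_sum_cmult_right GG_has_sum q q0)
    hence "((\<lambda>k. if r \<le> k then hh q n r (k - r) else 0) has_sum (q ^ (r * r + r) / qpoch q q r * Gv r)) UNIV"
      by (rule shift_has_sum[THEN iffD2])
    thus "((\<lambda>k. case (r, k) of (r, k) \<Rightarrow> gh (k, r)) has_sum (q ^ (r * r + r) / qpoch q q r * Gv r)) UNIV"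
      unfolding gh_def by simp
  qed
  have "(\<lambda>r. q ^ (r * r + r) / qpoch q q r * Gv r) = (\<lambda>r. if n \<le> r then qpoch_inf q * ww q n (r - n) else 0)"
  proof
    fix r
    show "q ^ (r * r + r) / qpoch q q r * Gv r = (if n \<le> r then qpoch_inf q * ww q n (r - n) else 0)"
    proof (cases "n \<le> r")
      case True
      then obtain i where r: "r = n + i" using le_Suc_ex by auto
      have "nat (int r - int n + 1 - 1) = i" using r by simp
      thus ?thesis unfolding Gv_def ww_def using True r by simp
    next
      case False thus ?thesis unfolding Gv_def by simp
    qed
  qed
  with S2 have S3: "((\<lambda>i. qpoch_inf q * ww q n i) has_sum S) UNIV"
    using shift_has_sum[of n "\<lambda>i. qpoch_inf q * ww q n i" S] by simp
  have "(tt q n has_sum qpoch q q n * S) UNIV"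
    unfolding tt_expand[OF q q0, abs_def] by (intro has_sum_cmult_right S1)
  with S3 show ?thesis by blast
qed



lemma ineq_f: fixes n k m t :: int
  assumes "2 * t = k * k + k" "-3 \<le> m" "0 \<le> n"
  shows "n + k \<le> 2 * (n * (n + 1) + t - n * k + m * n) + 2 * 4"
proof -
  define X where "X = 2 * (n * (n + 1) + t - n * k + m * n) + 2 * 4"
  define P where "P = 4 * ((n - k) * (n - k)) + ((2 * n - 5) * (2 * n - 5) + 7) + 8 * ((m + 3) * n)"
  have e: "4 * (X - (n + k)) = P"
    unfolding X_def P_def using assms(1) by algebra
  have "0 \<le> (m + 3) * n" using assms by simp
  hence "0 \<le> P" unfolding P_def by simp
  hence "0 \<le> X - (n + k)" using e by simp
  hence "n + k \<le> X" by linarith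
  thus ?thesis unfolding X_def .
qed

lemma ineq_g: fixes n N m :: int
  assumes "-3 \<le> m" "0 \<le> n" "0 \<le> N"
  shows "n + N \<le> 2 * (n * (n + 1) + m * n + (N * N + N)) + 2 * 2"
proof -
  define X where "X = 2 * (n * (n + 1) + m * n + (N * N + N)) + 2 * 2"
  define P where "P = ((4 * n - 5) * (4 * n - 5) + 7) + 16 * ((m + 3) * n) + 16 * (N * N) + 8 * N"
  have e: "8 * (X - (n + N)) = P"
    unfolding X_def P_def by algebra
  have "0 \<le> (m + 3) * n" using assms by simp
  hence "0 \<le> P" unfolding P_def using assms by simp
  hence "0 \<le> X - (n + N)" using e by simp
  hence "n + N \<le> X" by linarith
  thus ?thesis unfolding X_def .
qed

definition aa :: "int \<Rightarrow> complex \<Rightarrow> nat \<Rightarrow> complex" where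
  "aa m q n = q powi (int (n * (n + 1)) + m * int n) / qpoch q q n ^ 3"

lemma f_term_split:
  assumes q: "norm q < 1" and q0: "q \<noteq> 0"
  shows "f_term m q (n, k) = aa m q n * tt q n k"
proof -
  have "q powi (int (n * (n + 1)) + int (k * (k + 1) div 2) - int n * int k + m * int n)
      = q powi (int (n * (n + 1)) + m * int n) * q powi (int (k * (k + 1) div 2) - int n * int k)"
    using q0 by (simp add: power_int_add[symmetric] algebra_simps)
  thus ?thesis unfolding f_term_def aa_def tt_def using qpoch_nz[OF q] by (simp add: field_simps)
qed

lemma f_term_summable:
  assumes q: "norm q < 1" and q0: "q \<noteq> 0" and m: "m \<ge> -3"
  shows "f_term m q summable_on UNIV"
proof -
  let ?r = "norm q"
  define c0 where "c0 = exp (- (?r / (1 - ?r) ^ 2))"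
  define C0 where "C0 = exp (?r / (1 - ?r))"
  have c0: "0 < c0" "\<And>n. c0 \<le> norm (qpoch q q n)" unfolding c0_def using qpoch_norm_ge[OF q] by auto
  have C0: "\<And>n. norm (qpoch q q n) \<le> C0" unfolding C0_def using qpoch_norm_le[OF q] by auto
  have r0: "0 < ?r" "?r < 1" using q q0 by auto
  have C00: "0 \<le> C0" using order.trans[OF norm_ge_zero C0[of 0]] .
  show ?thesis
  proof (rule pair_summable[where \<rho>="sqrt ?r" and K="C0 / (c0 ^ 3 * c0 * ?r ^ 4)"])
    fix n k
    define E where "E = int (n * (n + 1)) + int (k * (k + 1) div 2) - int n * int k + m * int n"
    have "norm (f_term m q (n, k)) = ?r powi E * norm (qpoch q q (n + k)) / (norm (qpoch q q n) ^ 3 * norm (qpoch q q k))"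
      unfolding f_term_def E_def by (simp add: norm_mult norm_divide norm_power norm_power_int)
    also have "\<dots> \<le> ?r powi E * C0 / (c0 ^ 3 * c0)"
      using c0 C0 r0 C00 by (intro frac_le mult_left_mono mult_mono power_mono) auto
    also have "?r powi E \<le> sqrt ?r ^ n * sqrt ?r ^ k / ?r ^ 4"
    proof (rule powi_bound[OF r0])
      have t: "2 * int (k * (k + 1) div 2) = int k * int k + int k"
        unfolding kk_div using tri_int[of "Suc k"] by (simp add: algebra_simps)
      show "int n + int k \<le> 2 * E + 2 * int 4"
        unfolding E_def using ineq_f[OF t m, of "int n"] by (simp add: algebra_simps)
    qed
    hence "?r powi E * C0 / (c0 ^ 3 * c0) \<le> (sqrt ?r ^ n * sqrt ?r ^ k / ?r ^ 4) * C0 / (c0 ^ 3 * c0)"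
      using c0 C0[of 0] by (intro divide_right_mono mult_right_mono) auto
    finally show "norm (f_term m q (n, k)) \<le> C0 / (c0 ^ 3 * c0 * ?r ^ 4) * sqrt ?r ^ n * sqrt ?r ^ k"
      by (simp add: field_simps)
  qed (use r0 in auto)
qed

lemma M:
  assumes q: "norm q < 1" and q0: "q \<noteq> 0" and m: "m \<ge> -3"
  shows "((\<lambda>N. qpoch_inf q * (q ^ (N * N + N) / qpoch q q N *
            (\<Sum>n\<le>N. q powi (int (n * (n + 1)) + m * int n) / (qpoch q q n ^ 2 * qpoch q q (N - n)))))
          has_sum f_series m q) UNIV"
proof -
  let ?r = "norm q"
  have "\<forall>n. \<exists>S. (tt q n has_sum qpoch q q n * S) UNIV \<and> ((\<lambda>i. qpoch_inf q * ww q n i) has_sum S) UNIV"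
    using L3[OF q q0] by blast
  then obtain Sf where Sf: "\<And>n. (tt q n has_sum qpoch q q n * Sf n) UNIV"
       "\<And>n. ((\<lambda>i. qpoch_inf q * ww q n i) has_sum Sf n) UNIV"
    by metis
  have F: "(f_term m q has_sum f_series m q) UNIV"
    unfolding f_series_def by (rule has_sum_infsum[OF f_term_summable[OF q q0 m]])
  have F1: "((\<lambda>n. aa m q n * (qpoch q q n * Sf n)) has_sum f_series m q) UNIV"
  proof (rule has_sum_SigmaD[where B="\<lambda>_. UNIV"])
    show "(f_term m q has_sum f_series m q) (Sigma UNIV (\<lambda>_. UNIV))" using F by simp
    fix n
    show "((\<lambda>k. f_term m q (n, k)) has_sum aa m q n * (qpoch q q n * Sf n)) UNIV"
      unfolding f_term_split[OF q q0] by (intro has_sum_cmult_right Sf)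
  qed
  define g where "g = (\<lambda>(n, N). if n \<le> N then aa m q n * qpoch q q n * (qpoch_inf q * ww q n (N - n)) else 0)"
  have gs: "g summable_on UNIV"
  proof -
    define c0 where "c0 = exp (- (?r / (1 - ?r) ^ 2))"
    have c0: "0 < c0" "\<And>n. c0 \<le> norm (qpoch q q n)" unfolding c0_def using qpoch_norm_ge[OF q] by auto
    have r0: "0 < ?r" "?r < 1" using q q0 by auto
    show ?thesis
    proof (rule pair_summable[where \<rho>="sqrt ?r" and K="norm (qpoch_inf q) / (c0 ^ 2 * c0 * c0 * ?r ^ 2)"])
      fix n N
      show "norm (g (n, N)) \<le> norm (qpoch_inf q) / (c0 ^ 2 * c0 * c0 * ?r ^ 2) * sqrt ?r ^ n * sqrt ?r ^ N"
      proof (cases "n \<le> N")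
        case True
        then obtain i where N: "N = n + i" using le_Suc_ex by auto
        define E where "E = int (n * (n + 1)) + m * int n + int (N * N + N)"
        have nz: "qpoch q q j \<noteq> 0" for j using qpoch_nz[OF q] .
        have ga: "g (n, N) = qpoch_inf q * (q powi (int (n * (n + 1)) + m * int n) * q ^ (N * N + N)
                     / (qpoch q q n ^ 2 * qpoch q q N * qpoch q q i))"
        proof -
          have "aa m q n * qpoch q q n = q powi (int (n * (n + 1)) + m * int n) / qpoch q q n ^ 2"
            unfolding aa_def using nz[of n] by (simp add: power2_eq_square power3_eq_cube)
          moreover have "g (n, N) = aa m q n * qpoch q q n * (qpoch_inf q * (q ^ (N * N + N) / (qpoch q q N * qpoch q q i)))"
            unfolding g_def ww_def using True N by simp
          ultimately show ?thesis by (simp add: mult_ac)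
        qed
        have pe: "?r powi (int (n * (n + 1)) + m * int n) * ?r ^ (N * N + N) = ?r powi E"
          unfolding E_def using r0 by (simp add: power_int_add flip: power_int_of_nat)
        have "norm (g (n, N)) = norm (qpoch_inf q) * (?r powi E / (norm (qpoch q q n) ^ 2 * norm (qpoch q q N) * norm (qpoch q q i)))"
          unfolding ga pe[symmetric] by (simp add: norm_mult norm_divide norm_power norm_power_int)
        also have "\<dots> \<le> norm (qpoch_inf q) * (?r powi E / (c0 ^ 2 * c0 * c0))"
          using c0 r0 by (intro mult_left_mono divide_left_mono mult_mono power_mono)
                         (auto intro!: mult_pos_pos less_le_trans[OF c0(1) c0(2)] zero_less_power)
        also have "?r powi E \<le> sqrt ?r ^ n * sqrt ?r ^ N / ?r ^ 2"
        proof (rule powi_bound[OF r0])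
          show "int n + int N \<le> 2 * E + 2 * int 2"
            unfolding E_def using ineq_g[OF m, of "int n" "int N"] by (simp add: algebra_simps)
        qed
        hence "norm (qpoch_inf q) * (?r powi E / (c0 ^ 2 * c0 * c0)) \<le> norm (qpoch_inf q) * ((sqrt ?r ^ n * sqrt ?r ^ N / ?r ^ 2) / (c0 ^ 2 * c0 * c0))"
          using c0 by (intro divide_right_mono mult_left_mono) auto
        finally show ?thesis by (simp add: field_simps)
      next
        case False thus ?thesis unfolding g_def using c0 r0 by simp
      qed
    qed (use r0 in auto)
  qed
  then obtain Sg where Sg: "(g has_sum Sg) UNIV" using summable_on_def by blast
  have G1: "((\<lambda>n. aa m q n * (qpoch q q n * Sf n)) has_sum Sg) UNIV"
  proof (rule has_sum_SigmaD[where B="\<lambda>_. UNIV"])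
    show "(g has_sum Sg) (Sigma UNIV (\<lambda>_. UNIV))" using Sg by simp
    fix n
    have "((\<lambda>i. aa m q n * qpoch q q n * (qpoch_inf q * ww q n i)) has_sum aa m q n * qpoch q q n * Sf n) UNIV"
      by (intro has_sum_cmult_right Sf)
    hence "((\<lambda>N. if n \<le> N then aa m q n * qpoch q q n * (qpoch_inf q * ww q n (N - n)) else 0) has_sum aa m q n * qpoch q q n * Sf n) UNIV"
      by (rule shift_has_sum[THEN iffD2])
    thus "((\<lambda>N. g (n, N)) has_sum aa m q n * (qpoch q q n * Sf n)) UNIV"
      unfolding g_def by (simp add: mult_ac)
  qed
  have SgF: "Sg = f_series m q" using has_sum_unique[OF G1 F1] .
  have G2: "((\<lambda>N. \<Sum>n\<le>N. g (n, N)) has_sum Sg) UNIV"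
  proof (rule has_sum_SigmaD[where B="\<lambda>_. UNIV"])
    show "((\<lambda>(N, n). g (n, N)) has_sum Sg) (Sigma UNIV (\<lambda>_. UNIV))"
      using Sg has_sum_swap[where f=g and S=Sg and A=UNIV and B=UNIV] by simp
    fix N
    have "((\<lambda>n. if n \<le> N then g (n, N) else 0) has_sum (\<Sum>n\<le>N. g (n, N))) UNIV"
      by (rule fin_has_sum)
    thus "((\<lambda>n. case (N, n) of (N, n) \<Rightarrow> g (n, N)) has_sum (\<Sum>n\<le>N. g (n, N))) UNIV"
      by (simp add: g_def cong: if_cong)
  qed
  have eqN: "(\<Sum>n\<le>N. g (n, N)) = qpoch_inf q * (q ^ (N * N + N) / qpoch q q N *
            (\<Sum>n\<le>N. q powi (int (n * (n + 1)) + m * int n) / (qpoch q q n ^ 2 * qpoch q q (N - n))))" for N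
    unfolding sum_distrib_left
  proof (rule sum.cong[OF refl])
    fix n assume "n \<in> {..N}"
    hence nN: "n \<le> N" by simp
    have nz: "qpoch q q j \<noteq> 0" for j using qpoch_nz[OF q] .
    have "n + (N - n) = N" using nN by simp
    thus "g (n, N) = qpoch_inf q * (q ^ (N * N + N) / qpoch q q N *
            (q powi (int (n * (n + 1)) + m * int n) / (qpoch q q n ^ 2 * qpoch q q (N - n))))"
      unfolding g_def aa_def ww_def using nN nz by (simp add: field_simps power2_eq_square power3_eq_cube)
  qed
  show ?thesis using G2 unfolding eqN SgF .
qed



lemma ex_int2: fixes n d m t1 t2 t3 u :: int
  assumes "u = n + d + 1" "2 * t1 = u * u - u" "2 * t2 = n * n - n" "2 * t3 = d * d - d"
  shows "(n * (n + 1) + m * n) + (t3 + (n + 1) * d) = t1 + (t2 + (m + 1) * n)"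
  using assms by algebra

lemma qbin_prod:
  assumes q: "norm q < 1" and ns: "n \<le> s" and sN: "s \<le> N"
  shows "qbin q N n * qbin q (N - n) (s - n) = qbin q N s * qbin q s n"
proof -
  have nz: "qpoch q q j \<noteq> 0" for j using qpoch_nz[OF q] .
  have e: "N - n - (s - n) = N - s" using ns sN by simp
  show ?thesis unfolding qbin_def using ns sN nz by (simp add: e field_simps)
qed

lemma Zfin:
  assumes q: "norm q < 1" and q0: "q \<noteq> 0"
  shows "qpoch q q N ^ 2 * (\<Sum>n\<le>N. q powi (int (n * (n + 1)) + m * int n) / (qpoch q q n ^ 2 * qpoch q q (N - n)))
       = (\<Sum>s\<le>N. qbin q N s * ((-1) ^ s * q ^ tri (Suc s) * qpoch (q powi (m + 1)) q s))"
proof -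
  have nz: "qpoch q q j \<noteq> 0" for j using qpoch_nz[OF q] .
  define F where "F n j = qbin q N n * q powi (int (n * (n + 1)) + m * int n) * (qbin q (N - n) j * ((-1) ^ j * q ^ tri j * (q ^ Suc n) ^ j))" for n j
  have step1: "qpoch q q N ^ 2 * (q powi (int (n * (n + 1)) + m * int n) / (qpoch q q n ^ 2 * qpoch q q (N - n)))
        = (\<Sum>j\<le>N - n. F n j)" if "n \<le> N" for n
  proof -
    have e: "qpoch q q N = qpoch q q n * qpoch (q ^ Suc n) q (N - n)"
      using qpoch_add[of q n "N - n"] that by simp
    have "qpoch q q N ^ 2 * (q powi (int (n * (n + 1)) + m * int n) / (qpoch q q n ^ 2 * qpoch q q (N - n)))
        = qbin q N n * q powi (int (n * (n + 1)) + m * int n) * qpoch (q ^ Suc n) q (N - n)"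
      unfolding qbin_def using that nz by (simp add: e power2_eq_square field_simps)
    also have "\<dots> = (\<Sum>j\<le>N - n. F n j)"
      unfolding qbinomial[OF q, of "q ^ Suc n" "N - n"] F_def by (simp add: sum_distrib_left)
    finally show ?thesis .
  qed
  have "qpoch q q N ^ 2 * (\<Sum>n\<le>N. q powi (int (n * (n + 1)) + m * int n) / (qpoch q q n ^ 2 * qpoch q q (N - n)))
      = (\<Sum>n\<le>N. \<Sum>j\<le>N - n. F n j)"
    unfolding sum_distrib_left by (intro sum.cong refl step1) simp
  also have "\<dots> = (\<Sum>(n, j)\<in>{(i, j). i + j \<le> N}. F n j)"
  proof -
    have "{(i, j). i + j \<le> N} = Sigma {..N} (\<lambda>n. {..N - n})" by auto
    thus ?thesis by (simp add: sum.Sigma)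
  qed
  also have "\<dots> = (\<Sum>s\<le>N. \<Sum>n\<le>s. F n (s - n))" by (rule sum.triangle_reindex_eq)
  also have "\<dots> = (\<Sum>s\<le>N. qbin q N s * ((-1) ^ s * q ^ tri (Suc s) * qpoch (q powi (m + 1)) q s))"
  proof (rule sum.cong[OF refl])
    fix s assume sN: "s \<in> {..N}"
    have "(\<Sum>n\<le>s. F n (s - n)) = (\<Sum>n\<le>s. qbin q N s * ((-1) ^ s * q ^ tri (Suc s)) *
             (qbin q s n * ((-1) ^ n * q ^ tri n * (q powi (m + 1)) ^ n)))"
    proof (rule sum.cong[OF refl])
      fix n assume "n \<in> {..s}"
      then obtain d where s: "s = n + d" using le_Suc_ex by auto
      have ns: "n \<le> s" using s by simp
      have sd: "s - n = d" using s by simp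
      have qb: "qbin q N n * qbin q (N - n) d = qbin q N s * qbin q s n"
        using qbin_prod[OF q ns, of N] sN sd by simp
      have sq: "(-1::complex) ^ n * (-1) ^ n = 1"
        by (simp add: power_mult_distrib[symmetric])
      have sg: "(-1::complex) ^ d = (-1) ^ s * (-1) ^ n"
        unfolding s power_add using sq by (simp add: mult_ac)
      have ex: "(int (n * (n + 1)) + m * int n) + (int (tri d) + (int n + 1) * int d)
              = int (tri (Suc s)) + (int (tri n) + (m + 1) * int n)"
        using ex_int2[of "int (Suc s)" "int n" "int d" "int (tri (Suc s))" "int (tri n)" "int (tri d)" m]
          tri_int[of "Suc s"] tri_int[of n] tri_int[of d] unfolding s by (simp add: algebra_simps)
      have pw: "q powi (int (n * (n + 1)) + m * int n) * (q ^ tri d * (q ^ Suc n) ^ d)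
               = q ^ tri (Suc s) * (q ^ tri n * (q powi (m + 1)) ^ n)"
      proof -
        have "q powi (int (n * (n + 1)) + m * int n) * (q ^ tri d * (q ^ Suc n) ^ d)
            = q powi ((int (n * (n + 1)) + m * int n) + (int (tri d) + (int n + 1) * int d))"
        proof -
          have a: "(q ^ Suc n) ^ d = q powi ((int n + 1) * int d)"
          proof -
            have "(q ^ Suc n) ^ d = q ^ (Suc n * d)" by (simp only: power_mult)
            also have "\<dots> = q powi int (Suc n * d)" by (rule power_int_of_nat[symmetric])
            finally show ?thesis by (simp add: algebra_simps)
          qed
          have b: "q ^ tri d = q powi int (tri d)" by simp
          show ?thesis unfolding a b using q0 by (simp add: power_int_add)
        qed
        also have "\<dots> = q powi (int (tri (Suc s)) + (int (tri n) + (m + 1) * int n))" unfolding ex ..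
        also have "\<dots> = q ^ tri (Suc s) * (q ^ tri n * (q powi (m + 1)) ^ n)"
        proof -
          have a: "(q powi (m + 1)) ^ n = q powi ((m + 1) * int n)" by (rule power_int_power')
          have b: "q ^ tri n = q powi int (tri n)" "q ^ tri (Suc s) = q powi int (tri (Suc s))"
            by (rule power_int_of_nat[symmetric])+
          show ?thesis unfolding a b using q0 by (metis power_int_add)
        qed
        finally show ?thesis .
      qed
      have "F n (s - n) = (qbin q N n * qbin q (N - n) d) * (-1) ^ d *
              (q powi (int (n * (n + 1)) + m * int n) * (q ^ tri d * (q ^ Suc n) ^ d))"
        unfolding F_def sd by (simp add: mult_ac)
      also have "\<dots> = qbin q N s * ((-1) ^ s * q ^ tri (Suc s)) *
             (qbin q s n * ((-1) ^ n * q ^ tri n * (q powi (m + 1)) ^ n))"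
        unfolding qb sg pw by (simp add: mult_ac)
      finally show "F n (s - n) = qbin q N s * ((-1) ^ s * q ^ tri (Suc s)) *
             (qbin q s n * ((-1) ^ n * q ^ tri n * (q powi (m + 1)) ^ n))" .
    qed
    also have "\<dots> = qbin q N s * ((-1) ^ s * q ^ tri (Suc s)) * qpoch (q powi (m + 1)) q s"
      unfolding qbinomial[OF q, of "q powi (m + 1)" s] sum_distrib_left ..
    finally show "(\<Sum>n\<le>s. F n (s - n)) = qbin q N s * ((-1) ^ s * q ^ tri (Suc s) * qpoch (q powi (m + 1)) q s)"
      by (simp add: mult_ac)
  qed
  finally show ?thesis .
qed

lemma sum_trunc:
  assumes "\<And>s. s \<ge> 3 \<Longrightarrow> w s = 0"
  shows "(\<Sum>s\<le>N. qbin q N s * w s) = qbin q N 0 * w 0 + qbin q N 1 * w 1 + qbin q N 2 * w 2"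
proof -
  have "(\<Sum>s\<le>N. qbin q N s * w s) = (\<Sum>s\<le>N + 3. qbin q N s * w s)"
    by (rule sum.mono_neutral_left) (auto simp: qbin_def)
  also have "\<dots> = (\<Sum>s<3. qbin q N s * w s)"
    by (rule sum.mono_neutral_right) (use assms in auto)
  also have "\<dots> = qbin q N 0 * w 0 + qbin q N 1 * w 1 + qbin q N 2 * w 2"
    by (simp add: numeral_3_eq_3 numeral_2_eq_2)
  finally show ?thesis .
qed

lemma qbin_1:
  assumes q: "norm q < 1"
  shows "qbin q N 1 * (1 - q) = 1 - q ^ N"
proof (cases N)
  case 0 thus ?thesis by (simp add: qbin_def)
next
  case (Suc k)
  have nz: "qpoch q q j \<noteq> 0" for j using qpoch_nz[OF q] .
  have "qpoch q q 1 = 1 - q" by (simp add: qpoch_def)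
  thus ?thesis unfolding qbin_def Suc using nz[of k] nz[of 1]
    by (simp add: qpoch_qq_Suc field_simps)
qed

lemma qbin_2:
  assumes q: "norm q < 1" and q0: "q \<noteq> 0"
  shows "qbin q N 2 * ((1 - q) * (1 - q ^ 2)) = (1 - q ^ N) * (1 - q ^ N / q)"
proof (cases N)
  case 0 thus ?thesis by (simp add: qbin_def)
next
  case (Suc k)
  note Suck = Suc
  show ?thesis
  proof (cases k)
    case 0 thus ?thesis using Suc q0 by (simp add: qbin_def)
  next
    case (Suc j)
    have nz: "qpoch q q i \<noteq> 0" for i using qpoch_nz[OF q] .
    have q2: "qpoch q q 2 = (1 - q) * (1 - q ^ 2)" by (simp add: qpoch_def numeral_2_eq_2)
    have "qbin q N 2 = qpoch q q j * ((1 - q ^ Suc j) * (1 - q ^ Suc (Suc j))) / (qpoch q q 2 * qpoch q q j)"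
      unfolding qbin_def Suck Suc by (simp add: qpoch_qq_Suc numeral_2_eq_2 mult.assoc)
    also have "\<dots> = ((1 - q ^ Suc j) * (1 - q ^ Suc (Suc j))) / qpoch q q 2"
      using nz[of j] by simp
    finally have "qbin q N 2 * ((1 - q) * (1 - q ^ 2)) = (1 - q ^ Suc j) * (1 - q ^ Suc (Suc j))"
      using nz[of 2] unfolding q2[symmetric] by simp
    moreover have "q ^ Suc (Suc j) / q = q ^ Suc j" using q0 by simp
    ultimately show ?thesis unfolding Suck Suc by (simp add: mult.commute)
  qed
qed

lemma qpoch_vanish:
  assumes q0: "q \<noteq> 0" and js: "j < s"
  shows "qpoch (q powi (- int j)) q s = 0"
proof -
  have "1 - q powi (- int j) * q ^ j = 0" using q0 by (simp add: power_int_minus)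
  thus ?thesis unfolding qpoch_def using js by (intro prod_zero) auto
qed

lemma final_eq:
  fixes R :: "nat \<Rightarrow> complex"
  assumes "((\<lambda>N. c * R N) has_sum x) UNIV" "c \<noteq> 0"
  shows "x = c * (\<Sum>n. R n)"
proof -
  have s: "(\<lambda>N. c * R N) sums x" using has_sum_imp_sums[OF assms(1)] .
  hence "summable R" using assms(2) summable_cmult_iff sums_summable by blast
  thus ?thesis using sums_unique[OF s] suminf_mult by metis
qed

lemma Pval:
  assumes q: "norm q < 1" and q0: "q \<noteq> 0"
  shows "m = -1 \<Longrightarrow> (\<Sum>s\<le>N. qbin q N s * ((-1) ^ s * q ^ tri (Suc s) * qpoch (q powi (m + 1)) q s)) = 1"
    and "m = -2 \<Longrightarrow> (\<Sum>s\<le>N. qbin q N s * ((-1) ^ s * q ^ tri (Suc s) * qpoch (q powi (m + 1)) q s)) = 2 - q ^ N"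
    and "m = -3 \<Longrightarrow> (\<Sum>s\<le>N. qbin q N s * ((-1) ^ s * q ^ tri (Suc s) * qpoch (q powi (m + 1)) q s)) =
           (3 + inverse q) - (2 + 2 * inverse q) * q ^ N + q powi (2 * int N - 1)"
proof -
  have t: "tri 1 = 0" "tri 2 = 1" "tri 3 = 3" by (simp_all add: tri_def)
  have t': "tri (Suc 0) = 0" "tri (Suc (Suc 0)) = 1" "tri (Suc (Suc (Suc 0))) = 3" by (simp_all add: tri_def)
  define w where "w s = (-1) ^ s * q ^ tri (Suc s) * qpoch (q powi (m + 1)) q s" for s
  have b1: "qbin q N 1 * (1 - q) = 1 - q ^ N" by (rule qbin_1[OF q])
  have b2: "qbin q N 2 * ((1 - q) * (1 - q ^ 2)) = (1 - q ^ N) * (1 - q ^ N / q)" by (rule qbin_2[OF q q0])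
  have b0: "qbin q N 0 = 1" by (rule qbin_0[OF q])
  {
    assume m: "m = -1"
    have "w s = 0" if "s \<ge> 3" for s
      unfolding w_def m using qpoch_vanish[OF q0, of 0 s] that by simp
    hence "(\<Sum>s\<le>N. qbin q N s * w s) = qbin q N 0 * w 0 + qbin q N 1 * w 1 + qbin q N 2 * w 2"
      by (rule sum_trunc)
    also have "\<dots> = 1" unfolding w_def m b0 using qpoch_vanish[OF q0, of 0 1] qpoch_vanish[OF q0, of 0 2]
      by (simp add: t')
    finally show "(\<Sum>s\<le>N. qbin q N s * ((-1) ^ s * q ^ tri (Suc s) * qpoch (q powi (m + 1)) q s)) = 1"
      unfolding w_def .
  }
  {
    assume m: "m = -2"
    have mm: "m + 1 = - int 1" using m by simp
    have "w s = 0" if "s \<ge> 3" for s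
      unfolding w_def mm using qpoch_vanish[OF q0, of 1 s] that by simp
    hence "(\<Sum>s\<le>N. qbin q N s * w s) = qbin q N 0 * w 0 + qbin q N 1 * w 1 + qbin q N 2 * w 2"
      by (rule sum_trunc)
    also have "\<dots> = 1 + qbin q N 1 * (1 - q)"
      unfolding w_def mm b0 using qpoch_vanish[OF q0, of 1 2] q0
      by (simp add: t' qpoch_def power_int_minus field_simps)
    also have "\<dots> = 2 - q ^ N" unfolding b1 by simp
    finally show "(\<Sum>s\<le>N. qbin q N s * ((-1) ^ s * q ^ tri (Suc s) * qpoch (q powi (m + 1)) q s)) = 2 - q ^ N"
      unfolding w_def .
  }
  {
    assume m: "m = -3"
    have mm: "m + 1 = - int 2" using m by simp
    have "w s = 0" if "s \<ge> 3" for s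
      unfolding w_def mm using qpoch_vanish[OF q0, of 2 s] that by simp
    hence "(\<Sum>s\<le>N. qbin q N s * w s) = qbin q N 0 * w 0 + qbin q N 1 * w 1 + qbin q N 2 * w 2"
      by (rule sum_trunc)
    also have "\<dots> = 1 + (qbin q N 1 * (1 - q)) * ((1 + q) / q) + qbin q N 2 * ((1 - q) * (1 - q ^ 2))"
    proof -
      have w0: "w 0 = 1" unfolding w_def by (simp add: t')
      have w1: "w 1 = (1 - q) * ((1 + q) / q)"
      proof -
        have "w 1 = - q * (1 - 1 / q ^ 2)" unfolding w_def mm by (simp add: t' qpoch_def power_int_minus inverse_eq_divide)
        also have "\<dots> = (1 - q) * ((1 + q) / q)" using q0 by (simp add: field_simps power2_eq_square)
        finally show ?thesis .
      qed
      have w2: "w 2 = (1 - q) * (1 - q ^ 2)"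
      proof -
        have "w 2 = q ^ 3 * ((1 - 1 / q ^ 2) * (1 - 1 / q ^ 2 * q))"
          unfolding w_def mm by (simp add: t' qpoch_def power_int_minus numeral_2_eq_2 numeral_3_eq_3 inverse_eq_divide)
        also have "\<dots> = (1 - q) * (1 - q ^ 2)" using q0 by (simp add: field_simps power2_eq_square power3_eq_cube)
        finally show ?thesis .
      qed
      show ?thesis unfolding w0 w1 w2 b0 by (simp add: mult.assoc)
    qed
    also have "\<dots> = (3 + inverse q) - (2 + 2 * inverse q) * q ^ N + q powi (2 * int N - 1)"
    proof -
      have a: "2 * int N - 1 = int (N + N) - 1" by simp
      have d: "q powi (int (N + N) - 1) = q powi int (N + N) / q powi 1" using q0 by (intro power_int_diff) simp
      have "q powi (2 * int N - 1) = q ^ N * q ^ N / q" unfolding a d power_int_of_nat power_int_1_right power_add ..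
      thus ?thesis unfolding b1 b2 using q0 by (simp add: field_simps)
    qed
    finally show "(\<Sum>s\<le>N. qbin q N s * ((-1) ^ s * q ^ tri (Suc s) * qpoch (q powi (m + 1)) q s)) =
           (3 + inverse q) - (2 + 2 * inverse q) * q ^ N + q powi (2 * int N - 1)"
      unfolding w_def .
  }
qed

lemma assemble:
  assumes q: "norm q < 1" and q0: "q \<noteq> 0" and m: "m \<ge> -3"
    and P: "\<And>N. (\<Sum>s\<le>N. qbin q N s * ((-1) ^ s * q ^ tri (Suc s) * qpoch (q powi (m + 1)) q s)) = P N"
  shows "f_series m q = qpoch_inf q * (\<Sum>n. P n * q ^ (n * (n + 1)) / qpoch q q n ^ 3)"
proof -
  have nz: "qpoch q q j \<noteq> 0" for j using qpoch_nz[OF q] .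
  have eq: "qpoch_inf q * (q ^ (N * N + N) / qpoch q q N *
            (\<Sum>n\<le>N. q powi (int (n * (n + 1)) + m * int n) / (qpoch q q n ^ 2 * qpoch q q (N - n))))
          = qpoch_inf q * (P N * q ^ (N * (N + 1)) / qpoch q q N ^ 3)" for N
  proof -
    have "(\<Sum>n\<le>N. q powi (int (n * (n + 1)) + m * int n) / (qpoch q q n ^ 2 * qpoch q q (N - n)))
          = P N / qpoch q q N ^ 2"
      using Zfin[OF q q0, of N m] P[of N] nz[of N] by (simp add: field_simps)
    moreover have "N * N + N = N * (N + 1)" by (simp add: algebra_simps)
    ultimately show ?thesis using nz[of N] by (simp add: power2_eq_square power3_eq_cube field_simps)
  qed
  have "((\<lambda>N. qpoch_inf q * (P N * q ^ (N * (N + 1)) / qpoch q q N ^ 3)) has_sum f_series m q) UNIV"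
    using M[OF q q0 m] unfolding eq .
  thus ?thesis by (rule final_eq[OF _ qpoch_inf_nz[OF q]])
qed

theorem mainTheorem8:
  fixes q :: complex
  assumes "norm q < 1" and "q \<noteq> 0"
  shows "f_series (-1) q = qpoch_inf q * (\<Sum>n. q ^ (n * (n + 1)) / (qpoch q q n) ^ 3)
       \<and> f_series (-2) q = qpoch_inf q * (\<Sum>n. (2 - q ^ n) * q ^ (n * (n + 1)) / (qpoch q q n) ^ 3)
       \<and> f_series (-3) q = qpoch_inf q *
           (\<Sum>n. ((3 + inverse q) - (2 + 2 * inverse q) * q ^ n + q powi (2 * int n - 1))
                 * q ^ (n * (n + 1)) / (qpoch q q n) ^ 3)"
proof (intro conjI)
  have q: "norm q < 1" and q0: "q \<noteq> 0" using assms by auto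
  show "f_series (-1) q = qpoch_inf q * (\<Sum>n. q ^ (n * (n + 1)) / (qpoch q q n) ^ 3)"
    using assemble[OF q q0, of "-1" "\<lambda>N. 1"] Pval(1)[OF q q0] by simp
  show "f_series (-2) q = qpoch_inf q * (\<Sum>n. (2 - q ^ n) * q ^ (n * (n + 1)) / (qpoch q q n) ^ 3)"
    using assemble[OF q q0, of "-2" "\<lambda>N. 2 - q ^ N"] Pval(2)[OF q q0] by simp
  show "f_series (-3) q = qpoch_inf q *
           (\<Sum>n. ((3 + inverse q) - (2 + 2 * inverse q) * q ^ n + q powi (2 * int n - 1))
                 * q ^ (n * (n + 1)) / (qpoch q q n) ^ 3)"
    using assemble[OF q q0, of "-3" "\<lambda>N. (3 + inverse q) - (2 + 2 * inverse q) * q ^ N + q powi (2 * int N - 1)"]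
      Pval(3)[OF q q0] by simp
qed


end
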